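(* Let $G$ be a connected graph with $\delta(G)=1$, girth at least $15$, and $G\in\mathcal U$. Then no two single star support vertices of $G$ are at distance exactly $4$.
   Context: All graphs are finite and simple. A set $P\subseteq V(G)$ is an open packing if no two distinct vertices of $P$ have a common neighbor; it is maximal if maximal under inclusion among open packings. $\rho^o(G)$ is the maximum size of an open packing and $\rho^o_L(G)$ the minimum size of a maximal open packing; $\mathcal U$ is the class of graphs with $\rho^o_L(G)=\rho^o(G)$. A leaf is a vertex of degree $1$; a support vertex is a vertex adjacent to at least one leaf. A single star support vertex is a support vertex not adjacent to any other support vertex. *)

theory Defs
  imports Main
begin

definition graph :: "'a set \<Rightarrow> ('a \<Rightarrow> 'a \<Rightarrow> bool) \<Rightarrow> bool" where
  "graph V E \<longleftrightarrow> finite V \<and> (\<forall>u v. E u v \<longrightarrow> u \<in> V \<and> v \<in> V)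
     \<and> (\<forall>u v. E u v \<longrightarrow> E v u) \<and> (\<forall>v. \<not> E v v)"

definition nbhd :: "'a set \<Rightarrow> ('a \<Rightarrow> 'a \<Rightarrow> bool) \<Rightarrow> 'a \<Rightarrow> 'a set" where
  "nbhd V E v = {u \<in> V. E v u}"

definition deg :: "'a set \<Rightarrow> ('a \<Rightarrow> 'a \<Rightarrow> bool) \<Rightarrow> 'a \<Rightarrow> nat" where
  "deg V E v = card (nbhd V E v)"

definition min_deg :: "'a set \<Rightarrow> ('a \<Rightarrow> 'a \<Rightarrow> bool) \<Rightarrow> nat" where
  "min_deg V E = Min (deg V E ` V)"

definition walk :: "'a set \<Rightarrow> ('a \<Rightarrow> 'a \<Rightarrow> bool) \<Rightarrow> 'a list \<Rightarrow> bool" where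
  "walk V E p \<longleftrightarrow> p \<noteq> [] \<and> set p \<subseteq> V \<and> (\<forall>i. Suc i < length p \<longrightarrow> E (p ! i) (p ! Suc i))"

definition connected :: "'a set \<Rightarrow> ('a \<Rightarrow> 'a \<Rightarrow> bool) \<Rightarrow> bool" where
  "connected V E \<longleftrightarrow> V \<noteq> {} \<and>
     (\<forall>u\<in>V. \<forall>v\<in>V. \<exists>p. walk V E p \<and> hd p = u \<and> last p = v)"

definition dist :: "'a set \<Rightarrow> ('a \<Rightarrow> 'a \<Rightarrow> bool) \<Rightarrow> 'a \<Rightarrow> 'a \<Rightarrow> nat" where
  "dist V E u v = (LEAST n. \<exists>p. walk V E p \<and> hd p = u \<and> last p = v \<and> length p = Suc n)"

definition cycle :: "'a set \<Rightarrow> ('a \<Rightarrow> 'a \<Rightarrow> bool) \<Rightarrow> 'a list \<Rightarrow> bool" where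
  "cycle V E c \<longleftrightarrow> length c \<ge> 3 \<and> distinct c \<and> walk V E c \<and> E (last c) (hd c)"

text \<open>girth(G) \<ge> k (acyclic graphs have infinite girth).\<close>
definition girth_at_least :: "'a set \<Rightarrow> ('a \<Rightarrow> 'a \<Rightarrow> bool) \<Rightarrow> nat \<Rightarrow> bool" where
  "girth_at_least V E k \<longleftrightarrow> (\<forall>c. cycle V E c \<longrightarrow> length c \<ge> k)"

definition open_packing :: "'a set \<Rightarrow> ('a \<Rightarrow> 'a \<Rightarrow> bool) \<Rightarrow> 'a set \<Rightarrow> bool" where
  "open_packing V E P \<longleftrightarrow> P \<subseteq> V \<and>
     (\<forall>u\<in>P. \<forall>v\<in>P. u \<noteq> v \<longrightarrow> \<not> (\<exists>w. E u w \<and> E v w))"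

definition maximal_open_packing :: "'a set \<Rightarrow> ('a \<Rightarrow> 'a \<Rightarrow> bool) \<Rightarrow> 'a set \<Rightarrow> bool" where
  "maximal_open_packing V E P \<longleftrightarrow> open_packing V E P \<and>
     (\<forall>Q. open_packing V E Q \<and> P \<subseteq> Q \<longrightarrow> Q = P)"

definition open_packing_number :: "'a set \<Rightarrow> ('a \<Rightarrow> 'a \<Rightarrow> bool) \<Rightarrow> nat" where
  "open_packing_number V E = Max (card ` {P. open_packing V E P})"

definition lower_open_packing_number :: "'a set \<Rightarrow> ('a \<Rightarrow> 'a \<Rightarrow> bool) \<Rightarrow> nat" where
  "lower_open_packing_number V E = Min (card ` {P. maximal_open_packing V E P})"

definition in_U :: "'a set \<Rightarrow> ('a \<Rightarrow> 'a \<Rightarrow> bool) \<Rightarrow> bool" where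
  "in_U V E \<longleftrightarrow> lower_open_packing_number V E = open_packing_number V E"

definition leaf :: "'a set \<Rightarrow> ('a \<Rightarrow> 'a \<Rightarrow> bool) \<Rightarrow> 'a \<Rightarrow> bool" where
  "leaf V E v \<longleftrightarrow> v \<in> V \<and> deg V E v = 1"

definition support_vertex :: "'a set \<Rightarrow> ('a \<Rightarrow> 'a \<Rightarrow> bool) \<Rightarrow> 'a \<Rightarrow> bool" where
  "support_vertex V E v \<longleftrightarrow> v \<in> V \<and> (\<exists>u. E v u \<and> leaf V E u)"

definition single_star_support :: "'a set \<Rightarrow> ('a \<Rightarrow> 'a \<Rightarrow> bool) \<Rightarrow> 'a \<Rightarrow> bool" where
  "single_star_support V E v \<longleftrightarrow> support_vertex V E v \<and>
     \<not> (\<exists>u. E v u \<and> support_vertex V E u)"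

end

theory Submission
  imports Defs
begin

fun wk :: "('a \<Rightarrow> 'a \<Rightarrow> bool) \<Rightarrow> 'a list \<Rightarrow> bool" where
  "wk E (x # y # r) = (E x y \<and> wk E (y # r))"
| "wk E _ = True"

fun nb :: "'a list \<Rightarrow> bool" where
  "nb (x # y # z # r) = (x \<noteq> z \<and> nb (y # z # r))"
| "nb _ = True"

lemma wk_iff: "wk E p = (\<forall>i. Suc i < length p \<longrightarrow> E (p!i) (p!Suc i))"
proof (induction E p rule: wk.induct)
  case (1 E x y r)
  show ?case
    apply (simp add: 1)
    apply (rule iffI)
     apply clarify
     apply (case_tac i; simp)
    apply (intro conjI allI impI)
     apply (drule spec[of _ 0]; simp)
    apply (drule_tac x="Suc i" in spec; simp)
    done
qed auto

lemma nb_iff: "nb p = (\<forall>i. Suc (Suc i) < length p \<longrightarrow> p!i \<noteq> p!Suc (Suc i))"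
proof (induction p rule: nb.induct)
  case (1 x y z r)
  show ?case
    apply (simp add: 1)
    apply (rule iffI)
     apply clarify
     apply (case_tac i; simp)
    apply (intro conjI allI impI)
     apply (drule spec[of _ 0]; simp)
    apply (drule_tac x="Suc i" in spec; simp)
    done
qed auto

lemma wk_app: "wk E (xs @ ys) \<Longrightarrow> wk E xs"
  by (induction E xs rule: wk.induct) (auto simp: neq_Nil_conv)

lemma nb_app: "nb (xs @ ys) \<Longrightarrow> nb xs"
  by (induction xs rule: nb.induct) (auto simp: neq_Nil_conv)

lemma wk_split: "wk E (xs @ y # ys) = (wk E (xs @ [y]) \<and> wk E (y # ys))"
proof (induction xs)
  case (Cons x xs) then show ?case by (cases xs) auto
qed simp

lemma nb_split: "nb (xs @ y # z # ys) = (nb (xs @ [y, z]) \<and> nb (y # z # ys))"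
proof (induction xs rule: nb.induct)
  case (1 x y z r) then show ?case by auto
next
  case ("2_1") then show ?case by auto
next
  case ("2_2" v) then show ?case by auto
next
  case ("2_3" v va) then show ?case by auto
qed

lemma wk_rev: "(\<And>x y. E x y \<Longrightarrow> E y x) \<Longrightarrow> wk E xs \<Longrightarrow> wk E (rev xs)"
  apply (simp add: wk_iff rev_nth)
  apply clarify
  apply (drule_tac x="length xs - Suc (Suc i)" in spec)
  apply (auto simp: Suc_diff_Suc)
  done

lemma nb_rev: "nb xs \<Longrightarrow> nb (rev xs)"
  apply (simp add: nb_iff rev_nth)
  apply clarify
  apply (drule_tac x="length xs - Suc (Suc (Suc i))" in spec)
  apply (auto simp: Suc_diff_Suc)
  done

lemma graph_sym: "graph V E \<Longrightarrow> E x y \<Longrightarrow> E y x"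
  by (simp add: graph_def)

lemma graph_V: "graph V E \<Longrightarrow> E x y \<Longrightarrow> x \<in> V \<and> y \<in> V"
  by (simp add: graph_def)

lemma graph_irr: "graph V E \<Longrightarrow> \<not> E x x"
  by (simp add: graph_def)

lemma closed_nb:
  assumes G: "graph V E" and gir: "girth_at_least V E 15"
    and w: "wk E p" and nbp: "nb p" and len: "length p = Suc n" and n1: "n \<ge> 1"
    and cl: "p!0 = p!n"
  shows "15 \<le> n"
proof -
  define P where "P = (\<lambda>d. d > 0 \<and> (\<exists>i. i + d \<le> n \<and> p!i = p!(i+d)))"
  have Pn: "P n" using n1 cl by (auto simp: P_def intro: exI[of _ 0])
  define d where "d = (LEAST d. P d)"
  have Pd: "P d" unfolding d_def by (rule LeastI[of P n, OF Pn])
  have dmin: "\<And>d'. P d' \<Longrightarrow> d \<le> d'" unfolding d_def by (rule Least_le)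
  from Pd obtain i where d0: "d > 0" and id: "i + d \<le> n" and eq: "p!i = p!(i+d)"
    by (auto simp: P_def)
  have edge: "\<And>k. k < n \<Longrightarrow> E (p!k) (p!Suc k)" using w len by (simp add: wk_iff)
  have d1: "d \<noteq> 1"
  proof
    assume "d = 1"
    then have "E (p!i) (p!(i+d))" using edge id by simp
    then show False using eq graph_irr[OF G] by metis
  qed
  have d2: "d \<noteq> 2"
  proof
    assume "d = 2"
    then show False using nbp len id eq by (simp add: nb_iff)
  qed
  define c where "c = take d (drop i p)"
  have lc: "length c = d" using id len by (simp add: c_def)
  have cn: "\<And>k. k < d \<Longrightarrow> c!k = p!(i+k)" using id len by (simp add: c_def)
  have dist: "distinct c"
  proof (subst distinct_conv_nth, intro allI impI)
    fix k l assume k: "k < length c" and l: "l < length c" and kl: "k \<noteq> l"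
    show "c!k \<noteq> c!l"
    proof
      assume ck: "c!k = c!l"
      { fix k l assume k: "k < d" and l: "l < d" and kl: "k < l" and ck: "c!k = c!l"
        have "P (l - k)" unfolding P_def using k l kl ck cn id
          by (intro conjI exI[of _ "i+k"]) auto
        then have "d \<le> l - k" by (rule dmin)
        then have False using l kl by simp }
      then show False using k l kl ck lc by (metis linorder_neqE_nat)
    qed
  qed
  have inV: "\<And>k. k < n \<Longrightarrow> p!k \<in> V" using edge graph_V[OF G] by blast
  have cyc: "cycle V E c"
    unfolding cycle_def walk_def
  proof (intro conjI)
    show "3 \<le> length c" using lc d0 d1 d2 by simp
    show "distinct c" by (rule dist)
    show "c \<noteq> []" using lc d0 by auto
    show "set c \<subseteq> V"
    proof
      fix z assume "z \<in> set c"
      then obtain k where "k < d" "z = c!k" using lc by (auto simp: in_set_conv_nth)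
      then show "z \<in> V" using cn inV id by auto
    qed
    show "\<forall>j. Suc j < length c \<longrightarrow> E (c!j) (c!Suc j)"
      using cn edge id lc by auto
    have "last c = c!(d - 1)" using lc d0 by (subst last_conv_nth) auto
    also have "\<dots> = p!(i + (d - 1))" using cn d0 by simp
    finally have "last c = p!(i + (d - 1))" .
    moreover have "hd c = p!(i+d)" using cn d0 eq by (simp add: hd_conv_nth lc[symmetric])
    moreover have "E (p!(i + (d - 1))) (p!Suc (i + (d - 1)))" using edge[of "i + (d - 1)"] id d0 by linarith
    ultimately show "E (last c) (hd c)" using d0 by (simp add: Suc_diff_1)
  qed
  then have "15 \<le> length c" using gir by (simp add: girth_at_least_def)
  then show ?thesis using lc id by simp
qed

lemma closed_nb':
  assumes G: "graph V E" and gir: "girth_at_least V E 15"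
    and w: "wk E p" and nbp: "nb p" and ne: "p \<noteq> []" and cl: "hd p = last p"
    and l2: "length p \<ge> 2"
  shows "16 \<le> length p"
proof -
  obtain n where len: "length p = Suc n" using ne by (cases p) auto
  have "p!0 = p!n" using cl ne len by (simp add: hd_conv_nth last_conv_nth)
  then have "15 \<le> n" using closed_nb[OF G gir w nbp len] l2 len by simp
  then show ?thesis using len by simp
qed

lemma uniq:
  assumes G: "graph V E" and gir: "girth_at_least V E 15"
  shows "wk E p \<Longrightarrow> wk E q \<Longrightarrow> nb p \<Longrightarrow> nb q \<Longrightarrow> p \<noteq> [] \<Longrightarrow> q \<noteq> []
    \<Longrightarrow> hd p = hd q \<Longrightarrow> last p = last q \<Longrightarrow> length p + length q \<le> 16 \<Longrightarrow> p = q"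
proof (induction "length p + length q" arbitrary: p q rule: less_induct)
  case less
  show ?case
  proof (cases "length p = 1 \<or> length q = 1")
    case True
    then show ?thesis
    proof
      assume l: "length p = 1"
      then obtain x where px: "p = [x]" by (cases p) auto
      show ?thesis
      proof (cases "length q = 1")
        case True
        then obtain y where "q = [y]" by (cases q) auto
        then show ?thesis using px less.prems by simp
      next
        case False
        then have "length q \<ge> 2" using False less.prems(6) by (cases q) (auto simp: Suc_le_eq)
        moreover have "hd q = last q" using less.prems px by simp
        ultimately have "16 \<le> length q" using closed_nb'[OF G gir less.prems(2) less.prems(4) less.prems(6)] by blast
        then show ?thesis using less.prems l by simp
      qed
    next
      assume l: "length q = 1"
      then obtain x where qx: "q = [x]" by (cases q) auto
      show ?thesis
      proof (cases "length p = 1")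
        case True
        then obtain y where "p = [y]" by (cases p) auto
        then show ?thesis using qx less.prems by simp
      next
        case False
        then have "length p \<ge> 2" using False less.prems(5) by (cases p) (auto simp: Suc_le_eq)
        moreover have "hd p = last p" using less.prems qx by simp
        ultimately have "16 \<le> length p" using closed_nb'[OF G gir less.prems(1) less.prems(3) less.prems(5)] by blast
        then show ?thesis using less.prems l by simp
      qed
    qed
  next
    case False
    have lp: "length p \<ge> 2" using False less.prems(5) by (cases p) (auto simp: Suc_le_eq)
    have lq: "length q \<ge> 2" using False less.prems(6) by (cases q) (auto simp: Suc_le_eq)
    obtain p0 z where pz: "p = p0 @ [z]" using less.prems by (metis rev_exhaust)
    obtain q0 z' where qz: "q = q0 @ [z']" using less.prems by (metis rev_exhaust)
    have zz: "z' = z" using pz qz less.prems by simp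
    have p0ne: "p0 \<noteq> []" using pz lp by auto
    have q0ne: "q0 \<noteq> []" using qz lq by auto
    show ?thesis
    proof (cases "last p0 = last q0")
      case True
      have "p0 = q0"
        apply (rule less.hyps[of p0 q0])
        using less.prems pz qz p0ne q0ne True wk_app nb_app by (auto simp: hd_append)
      then show ?thesis using pz qz zz by simp
    next
      case False
      obtain p1 p' where p1: "p0 = p1 @ [p']" using p0ne by (metis rev_exhaust)
      obtain q1 q' where q1: "rev q0 = q' # q1" using q0ne by (cases "rev q0") auto
      define r where "r = p0 @ z # rev q0"
      have revq: "rev q = z # rev q0" using qz zz by simp
      have "wk E (rev q)" using wk_rev[of E q] graph_sym[OF G] less.prems(2) by blast
      then have wr: "wk E r" unfolding r_def
        using wk_split[of E p0 z "rev q0"] less.prems pz revq by simp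
      have "nb (rev q)" using nb_rev less.prems(4) by blast
      then have nr: "nb r" unfolding r_def
        using nb_split[of p1 p' z "q' # q1"] less.prems pz p1 q1 revq False by (simp add: hd_rev[symmetric])
      have rne: "r \<noteq> []" by (simp add: r_def)
      have hr: "hd r = hd p" using pz p0ne by (simp add: r_def)
      have lr: "last r = hd q" using qz q0ne by (simp add: r_def last_rev)
      have "length r \<ge> 2" using p0ne by (cases p0) (auto simp: r_def)
      then have "16 \<le> length r" using closed_nb'[OF G gir wr nr rne] hr lr less.prems by simp
      moreover have "length r + 1 = length p + length q" using pz qz by (simp add: r_def)
      ultimately show ?thesis using less.prems lp lq by simp
    qed
  qed
qed

lemma short:
  assumes G: "graph V E" and gir: "girth_at_least V E 15"
    and "wk E p" "wk E q" "nb p" "nb q" "p \<noteq> []" "q \<noteq> []"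
    "hd p = hd q" "last p = last q" "length p + length q \<le> 16" "length p \<noteq> length q"
  shows False
  using uniq[OF G gir assms(3-11)] assms(12) by simp



definition conf :: "('a \<Rightarrow> 'a \<Rightarrow> bool) \<Rightarrow> 'a set \<Rightarrow> 'a \<Rightarrow> bool" where
  "conf E S z \<longleftrightarrow> (\<exists>s\<in>S. \<exists>m. E s m \<and> E z m)"

lemma U_lemma:
  assumes G: "graph V E" and U: "in_U V E"
    and o1: "open_packing V E S1" and o2: "open_packing V E S2"
    and ne: "\<forall>s\<in>S2. \<exists>m. E s m"
    and cov: "\<And>z. conf E S2 z \<Longrightarrow> conf E S1 z"
  shows "card S2 \<le> card S1"
proof -
  have fV: "finite V" using G by (simp add: graph_def)
  define C where "C = {P. open_packing V E P \<and> S1 \<subseteq> P}"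
  have fOP: "finite {P. open_packing V E P}"
    by (rule finite_subset[of _ "Pow V"]) (auto simp: open_packing_def fV)
  have fC: "finite C" by (rule finite_subset[OF _ fOP]) (auto simp: C_def)
  have S1C: "S1 \<in> C" using o1 by (simp add: C_def)
  define k where "k = Max (card ` C)"
  have "k \<in> card ` C" unfolding k_def using fC S1C by (intro Max_in) auto
  then obtain M where MC: "M \<in> C" and Mk: "card M = k" by auto
  have Mmax: "\<And>P. P \<in> C \<Longrightarrow> card P \<le> card M" unfolding Mk k_def using fC by (intro Max_ge) auto
  have oM: "open_packing V E M" and S1M: "S1 \<subseteq> M" using MC by (auto simp: C_def)
  have pMM: "\<And>a b w. a \<in> M \<Longrightarrow> b \<in> M \<Longrightarrow> a \<noteq> b \<Longrightarrow> E a w \<Longrightarrow> E b w \<Longrightarrow> False"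
    using oM unfolding open_packing_def by blast
  have fM: "finite M" using oM fV by (auto simp: open_packing_def intro: finite_subset[OF _ fV])
  have maxM: "maximal_open_packing V E M"
    unfolding maximal_open_packing_def
  proof (intro conjI allI impI oM)
    fix Q assume "open_packing V E Q \<and> M \<subseteq> Q"
    then have oQ: "open_packing V E Q" and MQ: "M \<subseteq> Q" by auto
    have "Q \<in> C" using oQ MQ S1M by (auto simp: C_def)
    then have "card Q \<le> card M" by (rule Mmax)
    moreover have "finite Q" using oQ fV by (auto simp: open_packing_def intro: finite_subset[OF _ fV])
    ultimately show "Q = M" using MQ card_seteq[of Q M] by simp
  qed
  have fMax: "finite {P. maximal_open_packing V E P}"
    by (rule finite_subset[OF _ fOP]) (auto simp: maximal_open_packing_def)
  have L: "lower_open_packing_number V E \<le> card M"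
    unfolding lower_open_packing_number_def using fMax maxM by (intro Min_le) auto
  define Q where "Q = S2 \<union> (M - S1)"
  have oQ: "open_packing V E Q"
    unfolding open_packing_def
  proof (intro conjI ballI impI)
    show "Q \<subseteq> V" using o2 oM by (auto simp: Q_def open_packing_def)
  next
    fix x y assume x: "x \<in> Q" and y: "y \<in> Q" and xy: "x \<noteq> y"
    { fix s t assume s: "s \<in> S2" and t: "t \<in> M - S1" and st: "s \<noteq> t"
      have "\<not> (\<exists>w. E s w \<and> E t w)"
      proof
        assume "\<exists>w. E s w \<and> E t w"
        then have "conf E S2 t" using s by (auto simp: conf_def)
        then have "conf E S1 t" by (rule cov)
        then obtain s' m where s': "s' \<in> S1" "E s' m" "E t m" by (auto simp: conf_def)
        then have "s' \<noteq> t" using t by auto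
        then show False using pMM[of s' t m] s' S1M t by blast
      qed }
    note cross = this
    have p2: "\<And>a b. a \<in> S2 \<Longrightarrow> b \<in> S2 \<Longrightarrow> a \<noteq> b \<Longrightarrow> \<not> (\<exists>w. E a w \<and> E b w)"
      using o2 unfolding open_packing_def by blast
    have pM: "\<And>a b. a \<in> M \<Longrightarrow> b \<in> M \<Longrightarrow> a \<noteq> b \<Longrightarrow> \<not> (\<exists>w. E a w \<and> E b w)"
      using oM unfolding open_packing_def by blast
    have "x \<in> S2 \<or> x \<in> M - S1" "y \<in> S2 \<or> y \<in> M - S1" using x y by (auto simp: Q_def)
    then show "\<not> (\<exists>w. E x w \<and> E y w)"
    proof (elim disjE)
      assume "x \<in> S2" "y \<in> S2" then show ?thesis using p2 xy by blast
    next
      assume "x \<in> S2" "y \<in> M - S1" then show ?thesis using cross xy by blast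
    next
      assume "x \<in> M - S1" "y \<in> S2" then show ?thesis using cross[of y x] xy by blast
    next
      assume "x \<in> M - S1" "y \<in> M - S1" then show ?thesis using pM xy by blast
    qed
  qed
  have disj: "S2 \<inter> (M - S1) = {}"
  proof (rule ccontr)
    assume "S2 \<inter> (M - S1) \<noteq> {}"
    then obtain s where s: "s \<in> S2" "s \<in> M" "s \<notin> S1" by auto
    then obtain m where "E s m" using ne by auto
    then have "conf E S2 s" using s by (auto simp: conf_def)
    then have "conf E S1 s" by (rule cov)
    then obtain s' m' where s': "s' \<in> S1" "E s' m'" "E s m'" by (auto simp: conf_def)
    then have "s' \<noteq> s" using s by auto
    then show False using pMM[of s' s m'] s' S1M s by blast
  qed
  have fS2: "finite S2" using o2 fV by (auto simp: open_packing_def intro: finite_subset[OF _ fV])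
  have fS1: "finite S1" using fM S1M by (rule finite_subset[rotated])
  have cQ: "card Q = card S2 + (card M - card S1)"
    unfolding Q_def using disj fS2 fM S1M by (simp add: card_Un_disjoint card_Diff_subset fS1)
  have "card Q \<le> open_packing_number V E"
    unfolding open_packing_number_def using fOP oQ by (intro Max_ge) auto
  then have "card Q \<le> card M" using U L by (simp add: in_U_def)
  moreover have "card S1 \<le> card M" using fM S1M by (simp add: card_mono)
  ultimately show ?thesis using cQ by simp
qed

lemma leaf_uniq:
  assumes G: "graph V E" and l: "leaf V E l" and "E l m" and "E l m'"
  shows "m = m'"
proof -
  have "card (nbhd V E l) = 1" using l by (simp add: leaf_def deg_def)
  then obtain x where "nbhd V E l = {x}" by (auto simp: card_Suc_eq)
  then have "\<forall>z. (z \<in> V \<and> E l z) = (z = x)" by (auto simp: nbhd_def set_eq_iff)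
  moreover have "m \<in> V" "m' \<in> V" using graph_V[OF G assms(3)] graph_V[OF G assms(4)] by auto
  ultimately show ?thesis using assms(3,4) by metis
qed

lemma two_supports:
  assumes G: "graph V E" and U: "in_U V E"
    and "E x s1" "E x s2" "s1 \<noteq> s2" "support_vertex V E s1" "support_vertex V E s2"
  shows False
proof -
  obtain l1 where l1: "E s1 l1" "leaf V E l1" using assms(6) by (auto simp: support_vertex_def)
  obtain l2 where l2: "E s2 l2" "leaf V E l2" using assms(7) by (auto simp: support_vertex_def)
  have e1: "E l1 s1" and e2: "E l2 s2" using l1 l2 graph_sym[OF G] by auto
  have u1: "\<And>m. E l1 m \<Longrightarrow> m = s1" using leaf_uniq[OF G l1(2)] e1 by blast
  have u2: "\<And>m. E l2 m \<Longrightarrow> m = s2" using leaf_uniq[OF G l2(2)] e2 by blast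
  have ll: "l1 \<noteq> l2" using u1 e2 assms(5) by blast
  have "card {l1, l2} \<le> card {x}"
  proof (rule U_lemma[OF G U])
    show "open_packing V E {x}" using graph_V[OF G assms(3)] by (simp add: open_packing_def)
    show "open_packing V E {l1, l2}" unfolding open_packing_def
    proof (intro conjI ballI impI)
      show "{l1, l2} \<subseteq> V" using graph_V[OF G e1] graph_V[OF G e2] by simp
      fix a b assume "a \<in> {l1, l2}" "b \<in> {l1, l2}" "a \<noteq> b"
      then have "(a = l1 \<and> b = l2) \<or> (a = l2 \<and> b = l1)" by auto
      then show "\<not> (\<exists>w. E a w \<and> E b w)" using u1 u2 assms(5) by metis
    qed
    show "\<forall>s\<in>{l1, l2}. \<exists>m. E s m" using e1 e2 by auto
    fix z assume "conf E {l1, l2} z"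
    then obtain s m where "s \<in> {l1, l2}" "E s m" "E z m" by (auto simp: conf_def)
    then have "(m = s1 \<or> m = s2) \<and> E z m" using u1 u2 by auto
    then show "conf E {x} z" using assms(3,4) unfolding conf_def by blast
  qed
  then show False using ll by simp
qed

lemma ext:
  assumes G: "graph V E" and U: "in_U V E" and ss: "single_star_support V E s"
    and "E s y" "E y w" "w \<noteq> s"
  shows "\<exists>x t. E w x \<and> x \<noteq> y \<and> E x t \<and> t \<noteq> w"
proof -
  have fV: "finite V" using G by (simp add: graph_def)
  have yV: "y \<in> V" and wV: "w \<in> V" using graph_V[OF G assms(5)] by auto
  have sups: "support_vertex V E s" using ss by (simp add: single_star_support_def)
  have ny: "\<not> support_vertex V E y" using ss assms(4) by (auto simp: single_star_support_def)
  have nlw: "\<not> leaf V E w" using ny yV assms(5) by (auto simp: support_vertex_def)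
  have nsw: "\<not> support_vertex V E w"
    using two_supports[OF G U, of y s w] graph_sym[OF G assms(4)] assms(5,6) sups by blast
  have fn: "\<And>z. finite (nbhd V E z)" using fV by (simp add: nbhd_def)
  have yn: "y \<in> nbhd V E w" using yV assms(5) graph_sym[OF G] by (simp add: nbhd_def)
  have c1: "card (nbhd V E w) \<noteq> 1" using nlw wV by (simp add: leaf_def deg_def)
  have "\<exists>x\<in>nbhd V E w. x \<noteq> y"
  proof (rule ccontr)
    assume "\<not> ?thesis"
    then have "nbhd V E w = {y}" using yn by blast
    then show False using c1 by simp
  qed
  then obtain x where x: "x \<in> nbhd V E w" "x \<noteq> y" by blast
  then have xV: "x \<in> V" and ewx: "E w x" by (auto simp: nbhd_def)
  have nlx: "\<not> leaf V E x" using nsw wV ewx by (auto simp: support_vertex_def)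
  have wn: "w \<in> nbhd V E x" using wV ewx graph_sym[OF G] by (simp add: nbhd_def)
  have c2: "card (nbhd V E x) \<noteq> 1" using nlx xV by (simp add: leaf_def deg_def)
  have "\<exists>t\<in>nbhd V E x. t \<noteq> w"
  proof (rule ccontr)
    assume "\<not> ?thesis"
    then have "nbhd V E x = {w}" using wn by blast
    then show False using c2 by simp
  qed
  then obtain t where t: "t \<in> nbhd V E x" "t \<noteq> w" by blast
  then show ?thesis using ewx x by (auto simp: nbhd_def)
qed



lemma L_b:
  assumes G: "graph V E" and gir: "girth_at_least V E 15"
    and e: "E s \<alpha>" "E \<alpha> b" "E s y" "E y w" "E w x" "E x t"
    and d: "b \<noteq> s" "\<alpha> \<noteq> y" "s \<noteq> w" "x \<noteq> y" "t \<noteq> w"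
  shows "t \<noteq> b \<and> (\<forall>m. E t m \<longrightarrow> E b m \<longrightarrow> False)"
proof -
  have es: "E b \<alpha>" "E \<alpha> s" using e graph_sym[OF G] by auto
  have tb: "t \<noteq> b"
  proof
    assume tb: "t = b"
    show False
      by (rule short[OF G gir, of "[b,\<alpha>,s,y,w,x,t]" "[b]"]) (use e es d tb in auto)
  qed
  moreover have "\<forall>m. E t m \<longrightarrow> E b m \<longrightarrow> False"
  proof (intro allI impI)
    fix m assume tm: "E t m" and bm: "E b m"
    have xm: "x \<noteq> m"
    proof
      assume xm: "x = m"
      show False
        by (rule short[OF G gir, of "[b,\<alpha>,s,y,w,x]" "[b,x]"]) (use e es d xm bm in auto)
    qed
    show False
      by (rule short[OF G gir, of "[b,\<alpha>,s,y,w,x,t,m]" "[b,m]"]) (use e es d xm bm tm tb in auto)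
  qed
  ultimately show ?thesis by blast
qed

lemma L_s:
  assumes G: "graph V E" and gir: "girth_at_least V E 15"
    and e: "E s y" "E y w" "E w x" "E x t"
    and d: "s \<noteq> w" "x \<noteq> y" "t \<noteq> w"
  shows "t \<noteq> s \<and> (\<forall>m. E t m \<longrightarrow> E s m \<longrightarrow> False)"
proof -
  have ts: "t \<noteq> s"
  proof
    assume ts: "t = s"
    show False
      by (rule short[OF G gir, of "[s,y,w,x,t]" "[s]"]) (use e d ts in auto)
  qed
  moreover have "\<forall>m. E t m \<longrightarrow> E s m \<longrightarrow> False"
  proof (intro allI impI)
    fix m assume tm: "E t m" and sm: "E s m"
    have xm: "x \<noteq> m"
    proof
      assume xm: "x = m"
      show False
        by (rule short[OF G gir, of "[s,y,w,x]" "[s,x]"]) (use e d xm sm in auto)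
    qed
    show False
      by (rule short[OF G gir, of "[s,y,w,x,t,m]" "[s,m]"]) (use e d xm sm tm ts in auto)
  qed
  ultimately show ?thesis by blast
qed

lemma L_o:
  assumes G: "graph V E" and gir: "girth_at_least V E 15"
    and e: "E s' \<alpha>'" "E \<alpha>' b" "E b \<alpha>" "E \<alpha> s" "E s y" "E y w" "E w x" "E x t"
    and d: "s' \<noteq> b" "\<alpha>' \<noteq> \<alpha>" "b \<noteq> s" "\<alpha> \<noteq> y" "s \<noteq> w" "x \<noteq> y" "t \<noteq> w"
  shows "t \<noteq> s' \<and> (\<forall>m. E t m \<longrightarrow> E s' m \<longrightarrow> False)"
proof -
  have ts: "t \<noteq> s'"
  proof
    assume ts: "t = s'"
    show False
      by (rule short[OF G gir, of "[s',\<alpha>',b,\<alpha>,s,y,w,x,t]" "[s']"]) (use e d ts in auto)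
  qed
  moreover have "\<forall>m. E t m \<longrightarrow> E s' m \<longrightarrow> False"
  proof (intro allI impI)
    fix m assume tm: "E t m" and sm: "E s' m"
    have xm: "x \<noteq> m"
    proof
      assume xm: "x = m"
      show False
        by (rule short[OF G gir, of "[s',\<alpha>',b,\<alpha>,s,y,w,x]" "[s',x]"]) (use e d xm sm in auto)
    qed
    show False
      by (rule short[OF G gir, of "[s',\<alpha>',b,\<alpha>,s,y,w,x,t,m]" "[s',m]"]) (use e d xm sm tm ts in auto)
  qed
  ultimately show ?thesis by blast
qed

lemma L_same:
  assumes G: "graph V E" and gir: "girth_at_least V E 15"
    and e1: "E s y1" "E y1 w1" "E w1 x1" "E x1 t1"
    and d1: "s \<noteq> w1" "x1 \<noteq> y1" "t1 \<noteq> w1"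
    and e2: "E s y2" "E y2 w2" "E w2 x2" "E x2 t2"
    and d2: "s \<noteq> w2" "x2 \<noteq> y2" "t2 \<noteq> w2"
    and yw: "\<not> (y1 = y2 \<and> w1 = w2)" and tt: "t1 \<noteq> t2"
    and m: "E t1 m" "E t2 m"
  shows False
proof -
  have s: "E y1 s" "E x1 w1" "E t1 x1" "E w1 y1" "E m t2" using e1 m graph_sym[OF G] by auto
  show False
  proof (cases "y1 = y2")
    case True
    then have "w1 \<noteq> w2" using yw by auto
    show False
      by (rule short[OF G gir, of "[t1,x1,w1,y1,w2,x2,t2]" "[t1,m,t2]"])
        (use e1 e2 d1 d2 s m tt True \<open>w1 \<noteq> w2\<close> in auto)
  next
    case False
    show False
      by (rule short[OF G gir, of "[t1,x1,w1,y1,s,y2,w2,x2,t2]" "[t1,m,t2]"])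
        (use e1 e2 d1 d2 s m tt False in auto)
  qed
qed

lemma L_cross:
  assumes G: "graph V E" and gir: "girth_at_least V E 15"
    and p: "E s \<alpha>" "E \<alpha> b" "E b \<alpha>'" "E \<alpha>' s'"
    and dp: "s \<noteq> b" "\<alpha> \<noteq> \<alpha>'" "b \<noteq> s'"
    and e1: "E s y1" "E y1 w1" "E w1 x1" "E x1 t1"
    and d1: "s \<noteq> w1" "x1 \<noteq> y1" "t1 \<noteq> w1" "y1 \<noteq> \<alpha>"
    and e2: "E s' y2" "E y2 w2" "E w2 x2" "E x2 t2"
    and d2: "s' \<noteq> w2" "x2 \<noteq> y2" "t2 \<noteq> w2" "y2 \<noteq> \<alpha>'"
    and tt: "t1 \<noteq> t2"
    and m: "E t1 m" "E t2 m"
  shows False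
proof -
  have s: "E y1 s" "E x1 w1" "E t1 x1" "E w1 y1" "E m t2" using e1 m graph_sym[OF G] by auto
  show False
    by (rule short[OF G gir, of "[t1,x1,w1,y1,s,\<alpha>,b,\<alpha>',s',y2,w2,x2,t2]" "[t1,m,t2]"])
      (use e1 e2 d1 d2 s m tt p dp in auto)
qed



lemma mkw:
  assumes G: "graph V E" and w: "wk E p" and l: "2 \<le> length p"
  shows "walk V E p"
  unfolding walk_def
proof (intro conjI)
  show "p \<noteq> []" using l by auto
  have ed: "\<And>i. Suc i < length p \<Longrightarrow> E (p!i) (p!Suc i)" using w by (simp add: wk_iff)
  then show "\<forall>i. Suc i < length p \<longrightarrow> E (p!i) (p!Suc i)" by blast
  show "set p \<subseteq> V"
  proof
    fix z assume "z \<in> set p"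
    then obtain k where k: "k < length p" "z = p!k" by (auto simp: in_set_conv_nth)
    show "z \<in> V"
    proof (cases "Suc k < length p")
      case True then show ?thesis using ed[of k] graph_V[OF G] k by blast
    next
      case False
      then have "k = Suc (k - 1)" "Suc (k - 1) < length p" using k l by auto
      then show ?thesis using ed[of "k - 1"] graph_V[OF G] k by metis
    qed
  qed
qed

lemma op_intro:
  assumes "S \<subseteq> V" and "\<And>p q w. p \<in> S \<Longrightarrow> q \<in> S \<Longrightarrow> p \<noteq> q \<Longrightarrow> E p w \<Longrightarrow> E q w \<Longrightarrow> False"
  shows "open_packing V E S"
  using assms unfolding open_packing_def by blast

theorem claim3:
  fixes V :: "'a set" and E :: "'a \<Rightarrow> 'a \<Rightarrow> bool"
  assumes "graph V E" and "connected V E" and "min_deg V E = 1"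
    and "girth_at_least V E 15" and "in_U V E"
    and "single_star_support V E u" and "single_star_support V E v"
  shows "dist V E u v \<noteq> 4"
proof
  assume d4: "dist V E u v = 4"
  note G = assms(1) and gir = assms(4) and U = assms(5) and ssu = assms(6) and ssv = assms(7)
  have uV: "u \<in> V" and vV: "v \<in> V" using ssu ssv
    by (auto simp: single_star_support_def support_vertex_def)
  define P where "P = (\<lambda>n. \<exists>p. walk V E p \<and> hd p = u \<and> last p = v \<and> length p = Suc n)"
  have dP: "dist V E u v = Least P" by (simp add: dist_def P_def)
  obtain p0 where p0: "walk V E p0" "hd p0 = u" "last p0 = v"
    using assms(2) uV vV by (auto simp: connected_def)
  then have "length p0 = Suc (length p0 - 1)" by (cases p0) (auto simp: walk_def)
  then have exP: "\<exists>n. P n" unfolding P_def using p0 by blast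
  have P4: "P 4" using LeastI_ex[OF exP] d4 dP by simp
  have lt: "\<And>n. n < 4 \<Longrightarrow> \<not> P n" using not_less_Least d4 dP by metis
  obtain p where pw: "walk V E p" and ph: "hd p = u" and pl: "last p = v" and plen: "length p = 5"
    using P4 by (auto simp: P_def)
  obtain x0 a b c x4 where pe: "p = [x0,a,b,c,x4]"
    using plen by (auto simp: length_Suc_conv numeral_eq_Suc)
  have x0: "x0 = u" and x4: "x4 = v" using ph pl pe by auto
  have ed: "\<And>i. Suc i < 5 \<Longrightarrow> E (p!i) (p!Suc i)" using pw plen by (simp add: walk_def)
  have ua: "E u a" using ed[of 0] pe x0 by simp
  have ab: "E a b" using ed[of 1] pe by simp
  have bc: "E b c" using ed[of 2] pe by simp
  have cv: "E c v" using ed[of 3] pe x4 by simp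
  have sy: "\<And>x y. E x y \<Longrightarrow> E y x" using graph_sym[OF G] by blast
  have P2: "\<And>m. E u m \<Longrightarrow> E m v \<Longrightarrow> False"
  proof -
    fix m assume "E u m" "E m v"
    then have "walk V E [u,m,v]" by (intro mkw[OF G]) auto
    then have "P 2" unfolding P_def by (intro exI[of _ "[u,m,v]"]) auto
    then show False using lt by simp
  qed
  have uv: "u \<noteq> v"
  proof
    assume "u = v"
    then have "walk V E [u]" using uV by (simp add: walk_def)
    then have "P 0" unfolding P_def using \<open>u = v\<close> by (intro exI[of _ "[u]"]) auto
    then show False using lt by simp
  qed
  have ub: "u \<noteq> b" using P2[of c] bc cv by auto
  have ac: "a \<noteq> c" using P2[of a] ua cv by auto
  have bv: "b \<noteq> v" using P2[of a] ua ab by auto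
  have bV: "b \<in> V" using graph_V[OF G ab] by simp
  define PU where "PU = (\<lambda>y w. E u y \<and> y \<noteq> a \<and> E y w \<and> w \<noteq> u)"
  define PV where "PV = (\<lambda>y w. E v y \<and> y \<noteq> c \<and> E y w \<and> w \<noteq> v)"
  have exQ: "\<And>y w. PU y w \<or> PV y w \<Longrightarrow> \<exists>x t. E w x \<and> x \<noteq> y \<and> E x t \<and> t \<noteq> w"
  proof -
    fix y w assume "PU y w \<or> PV y w"
    then show "\<exists>x t. E w x \<and> x \<noteq> y \<and> E x t \<and> t \<noteq> w"
    proof
      assume "PU y w" then show ?thesis using ext[OF G U ssu, of y w] by (simp add: PU_def)
    next
      assume "PV y w" then show ?thesis using ext[OF G U ssv, of y w] by (simp add: PV_def)
    qed
  qed
  define X where "X = (\<lambda>y w. SOME x. \<exists>t. E w x \<and> x \<noteq> y \<and> E x t \<and> t \<noteq> w)"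
  define Tt where "Tt = (\<lambda>y w. SOME t. E w (X y w) \<and> X y w \<noteq> y \<and> E (X y w) t \<and> t \<noteq> w)"
  have XT: "\<And>y w. PU y w \<or> PV y w \<Longrightarrow> E w (X y w) \<and> X y w \<noteq> y \<and> E (X y w) (Tt y w) \<and> Tt y w \<noteq> w"
  proof -
    fix y w assume h: "PU y w \<or> PV y w"
    have "\<exists>t. E w (X y w) \<and> X y w \<noteq> y \<and> E (X y w) t \<and> t \<noteq> w"
      unfolding X_def using exQ[OF h] by (rule someI_ex)
    then show "E w (X y w) \<and> X y w \<noteq> y \<and> E (X y w) (Tt y w) \<and> Tt y w \<noteq> w"
      unfolding Tt_def by (rule someI_ex)
  qed
  define T where "T = {Tt y w | y w. PU y w \<or> PV y w}"
  have TV: "T \<subseteq> V" using XT graph_V[OF G] by (auto simp: T_def)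
  have tU: "\<And>y w. PU y w \<Longrightarrow> Tt y w \<noteq> b \<and> Tt y w \<noteq> u \<and> Tt y w \<noteq> v \<and>
      (\<forall>m. E (Tt y w) m \<longrightarrow> (E b m \<or> E u m \<or> E v m) \<longrightarrow> False)"
  proof -
    fix y w assume h: "PU y w"
    then have h': "E u y" "y \<noteq> a" "E y w" "w \<noteq> u" by (auto simp: PU_def)
    have xt: "E w (X y w)" "X y w \<noteq> y" "E (X y w) (Tt y w)" "Tt y w \<noteq> w" using XT h by auto
    have 1: "Tt y w \<noteq> b \<and> (\<forall>m. E (Tt y w) m \<longrightarrow> E b m \<longrightarrow> False)"
      using L_b[OF G gir ua ab h'(1) h'(3) xt(1) xt(3)] ub h' xt by auto
    have 2: "Tt y w \<noteq> u \<and> (\<forall>m. E (Tt y w) m \<longrightarrow> E u m \<longrightarrow> False)"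
      using L_s[OF G gir h'(1) h'(3) xt(1) xt(3)] h' xt by auto
    have 3: "Tt y w \<noteq> v \<and> (\<forall>m. E (Tt y w) m \<longrightarrow> E v m \<longrightarrow> False)"
      using L_o[OF G gir sy[OF cv] sy[OF bc] sy[OF ab] sy[OF ua] h'(1) h'(3) xt(1) xt(3)]
        bv ac ub h' xt by auto
    show "?thesis y w" using 1 2 3 by blast
  qed
  have tV: "\<And>y w. PV y w \<Longrightarrow> Tt y w \<noteq> b \<and> Tt y w \<noteq> u \<and> Tt y w \<noteq> v \<and>
      (\<forall>m. E (Tt y w) m \<longrightarrow> (E b m \<or> E u m \<or> E v m) \<longrightarrow> False)"
  proof -
    fix y w assume h: "PV y w"
    then have h': "E v y" "y \<noteq> c" "E y w" "w \<noteq> v" by (auto simp: PV_def)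
    have xt: "E w (X y w)" "X y w \<noteq> y" "E (X y w) (Tt y w)" "Tt y w \<noteq> w" using XT h by auto
    have 1: "Tt y w \<noteq> b \<and> (\<forall>m. E (Tt y w) m \<longrightarrow> E b m \<longrightarrow> False)"
      using L_b[OF G gir sy[OF cv] sy[OF bc] h'(1) h'(3) xt(1) xt(3)] bv h' xt by auto
    have 2: "Tt y w \<noteq> v \<and> (\<forall>m. E (Tt y w) m \<longrightarrow> E v m \<longrightarrow> False)"
      using L_s[OF G gir h'(1) h'(3) xt(1) xt(3)] h' xt by auto
    have 3: "Tt y w \<noteq> u \<and> (\<forall>m. E (Tt y w) m \<longrightarrow> E u m \<longrightarrow> False)"
      using L_o[OF G gir ua ab bc cv h'(1) h'(3) xt(1) xt(3)]
        bv ac ub h' xt by auto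
    show "?thesis y w" using 1 2 3 by blast
  qed
  have tT: "\<And>t1 t2 m. t1 \<in> T \<Longrightarrow> t2 \<in> T \<Longrightarrow> t1 \<noteq> t2 \<Longrightarrow> E t1 m \<Longrightarrow> E t2 m \<Longrightarrow> False"
  proof -
    fix t1 t2 m assume t1: "t1 \<in> T" and t2: "t2 \<in> T" and tt: "t1 \<noteq> t2" and m: "E t1 m" "E t2 m"
    obtain y1 w1 where t1e: "t1 = Tt y1 w1" and h1: "PU y1 w1 \<or> PV y1 w1" using t1 by (auto simp: T_def)
    obtain y2 w2 where t2e: "t2 = Tt y2 w2" and h2: "PU y2 w2 \<or> PV y2 w2" using t2 by (auto simp: T_def)
    have yw: "\<not> (y1 = y2 \<and> w1 = w2)" using tt t1e t2e by auto
    have x1: "E w1 (X y1 w1)" "X y1 w1 \<noteq> y1" "E (X y1 w1) t1" "t1 \<noteq> w1" using XT[OF h1] t1e by auto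
    have x2: "E w2 (X y2 w2)" "X y2 w2 \<noteq> y2" "E (X y2 w2) t2" "t2 \<noteq> w2" using XT[OF h2] t2e by auto
    show False
      using h1 h2
    proof (elim disjE)
      assume a1: "PU y1 w1" and a2: "PU y2 w2"
      show False
        by (rule L_same[OF G gir _ _ x1(1) x1(3) _ x1(2) x1(4) _ _ x2(1) x2(3) _ x2(2) x2(4) yw tt m])
          (use a1 a2 in \<open>auto simp: PU_def\<close>)
    next
      assume a1: "PV y1 w1" and a2: "PV y2 w2"
      show False
        by (rule L_same[OF G gir _ _ x1(1) x1(3) _ x1(2) x1(4) _ _ x2(1) x2(3) _ x2(2) x2(4) yw tt m])
          (use a1 a2 in \<open>auto simp: PV_def\<close>)
    next
      assume a1: "PU y1 w1" and a2: "PV y2 w2"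
      show False
        by (rule L_cross[OF G gir ua ab bc cv ub ac bv _ _ x1(1) x1(3) _ x1(2) x1(4) _ _ _ x2(1) x2(3) _ x2(2) x2(4) _ tt m])
          (use a1 a2 in \<open>auto simp: PU_def PV_def\<close>)
    next
      assume a1: "PV y1 w1" and a2: "PU y2 w2"
      show False
        by (rule L_cross[OF G gir sy[OF cv] sy[OF bc] sy[OF ab] sy[OF ua] _ _ _ _ _ x1(1) x1(3) _ x1(2) x1(4) _ _ _ x2(1) x2(3) _ x2(2) x2(4) _ tt m])
          (use a1 a2 bv ub ac in \<open>auto simp: PU_def PV_def\<close>)
    qed
  qed
  define S1 where "S1 = insert b T"
  define S2 where "S2 = insert u (insert v T)"
  have bT: "b \<notin> T" and uT: "u \<notin> T" and vT: "v \<notin> T"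
    using tU tV by (auto simp: T_def)
  have fT: "finite T" using TV G by (auto simp: graph_def intro: finite_subset)
  have o1: "open_packing V E S1"
  proof (rule op_intro)
    show "S1 \<subseteq> V" using TV bV by (simp add: S1_def)
  next
    fix p q w assume p: "p \<in> S1" and q: "q \<in> S1" and pq: "p \<noteq> q" and pw: "E p w" and qw: "E q w"
    have tb: "\<And>t. t \<in> T \<Longrightarrow> E t w \<Longrightarrow> E b w \<Longrightarrow> False" using tU tV by (auto simp: T_def)
    show False
    proof (cases "p = b")
      case True
      then have "q \<in> T" using q pq by (simp add: S1_def)
      then show False using tb pw qw True by blast
    next
      case False
      then have pT: "p \<in> T" using p by (simp add: S1_def)
      show False
      proof (cases "q = b")
        case True then show False using tb pT pw qw by blast
      next
        case False then have "q \<in> T" using q by (simp add: S1_def)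
        then show False using tT pT pq pw qw by blast
      qed
    qed
  qed
  have o2: "open_packing V E S2"
  proof (rule op_intro)
    show "S2 \<subseteq> V" using TV uV vV by (simp add: S2_def)
  next
    fix p q w assume p: "p \<in> S2" and q: "q \<in> S2" and pq: "p \<noteq> q" and pw: "E p w" and qw: "E q w"
    have tuv: "\<And>t. t \<in> T \<Longrightarrow> E t w \<Longrightarrow> (E u w \<or> E v w) \<Longrightarrow> False" using tU tV by (auto simp: T_def)
    have uvw: "E u w \<Longrightarrow> E v w \<Longrightarrow> False" using P2 sy by blast
    have "p = u \<or> p = v \<or> p \<in> T" "q = u \<or> q = v \<or> q \<in> T" using p q by (auto simp: S2_def)
    then show False using tuv uvw tT pq pw qw by metis
  qed
  have ne: "\<forall>s\<in>S2. \<exists>m. E s m"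
  proof
    fix s assume "s \<in> S2"
    then have "s = u \<or> s = v \<or> s \<in> T" by (auto simp: S2_def)
    then show "\<exists>m. E s m"
    proof (elim disjE)
      assume "s \<in> T"
      then obtain y w where "s = Tt y w" "PU y w \<or> PV y w" by (auto simp: T_def)
      then show ?thesis using XT sy by blast
    qed (use ua sy[OF cv] in auto)
  qed
  have cov: "\<And>z. conf E S2 z \<Longrightarrow> conf E S1 z"
  proof -
    fix z assume "conf E S2 z"
    then obtain s m where s: "s \<in> S2" "E s m" "E z m" by (auto simp: conf_def)
    show "conf E S1 z"
    proof (cases "s \<in> T")
      case True then show ?thesis using s by (auto simp: conf_def S1_def)
    next
      case False
      then have "s = u \<or> s = v" using s by (auto simp: S2_def)
      then show ?thesis
      proof
        assume su: "s = u"
        show ?thesis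
        proof (cases "m = a \<or> z = u")
          case True
          then have "E b a \<and> E z a" using s su sy ab ua by auto
          then show ?thesis by (auto simp: conf_def S1_def)
        next
          case False
          then have h: "PU m z" using s su sy by (auto simp: PU_def)
          then have "E (Tt m z) (X m z) \<and> E z (X m z)" using XT sy by blast
          moreover have "Tt m z \<in> T" using h by (auto simp: T_def)
          ultimately show ?thesis by (auto simp: conf_def S1_def)
        qed
      next
        assume sv: "s = v"
        show ?thesis
        proof (cases "m = c \<or> z = v")
          case True
          then have "E b c \<and> E z c" using s sv sy bc cv by auto
          then show ?thesis by (auto simp: conf_def S1_def)
        next
          case False
          then have h: "PV m z" using s sv sy by (auto simp: PV_def)
          then have "E (Tt m z) (X m z) \<and> E z (X m z)" using XT sy by blast
          moreover have "Tt m z \<in> T" using h by (auto simp: T_def)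
          ultimately show ?thesis by (auto simp: conf_def S1_def)
        qed
      qed
    qed
  qed
  have "card S2 \<le> card S1" by (rule U_lemma[OF G U o1 o2 ne cov])
  moreover have "card S2 = card T + 2" using fT uT vT uv by (simp add: S2_def)
  moreover have "card S1 = card T + 1" using fT bT by (simp add: S1_def)
  ultimately show False by simp
qed


end
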